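(* For $0\le k\le n$, $B(n,k)$ equals the number of snakes $\pi=\pi_1\cdots\pi_n$ of type $B_n$ with $\alpha(\pi)=k$, where $$\alpha(\pi)=\#\{j \text{ odd}:\pi_j>0\}+\#\{j\text{ even}:\pi_j<0\}-\#\{j\text{ odd}:\pi_j<0\}-\#\{j\text{ even}:\pi_j>0\},$$ $j$ ranging over $\{1,\dots,n\}$.
   Context: A signed permutation of $[n]$ is a permutation of $[n]$ with some entries negated ($\bar i=-i$), ordered by $\bar n<\cdots<\bar1<1<\cdots<n$. A snake of type $B_n$ is a signed permutation with $0<\pi_1>\pi_2<\pi_3>\pi_4<\cdots\pi_n$. A labeled ballot path is a lattice path from $(0,0)$ with steps $u=(1,1)$, $d=(1,-1)$ never going below the $x$-axis, each step carrying an integer label between $0$ and its height, where the height of a step is the smaller $y$-coordinate of its endpoints. $B(n,k)$ is the number of labeled ballot paths from $(0,0)$ ending at $(n,k)$. *)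

theory Defs
  imports Main
begin

text \<open>Signed permutations of [n] as integer lists pi_1 ... pi_n (bar i = -i); the order
  bar n < ... < bar 1 < 1 < ... < n is the usual order on int.\<close>
definition signed_perm :: "nat \<Rightarrow> int list \<Rightarrow> bool" where
  "signed_perm n p \<longleftrightarrow> length p = n \<and> distinct (map abs p) \<and> set (map abs p) = {1..int n}"

text \<open>Snake of type B_n: 0 < pi_1 > pi_2 < pi_3 > ... (positions 1-indexed;
  list index i corresponds to position i+1).\<close>
definition snake :: "nat \<Rightarrow> int list \<Rightarrow> bool" where
  "snake n p \<longleftrightarrow> signed_perm n p \<and> (n \<ge> 1 \<longrightarrow> 0 < p ! 0) \<and>
     (\<forall>i. i + 1 < n \<longrightarrow> (if even i then p ! i > p ! (i+1) else p ! i < p ! (i+1)))"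

text \<open>alpha statistic; list index i is position j = i+1, so j odd iff i even.\<close>
definition alpha :: "int list \<Rightarrow> int" where
  "alpha p =
     int (card {i. i < length p \<and> even i \<and> p ! i > 0})
   + int (card {i. i < length p \<and> odd i \<and> p ! i < 0})
   - int (card {i. i < length p \<and> even i \<and> p ! i < 0})
   - int (card {i. i < length p \<and> odd i \<and> p ! i > 0})"

text \<open>Labeled ballot paths: a list of steps (up?, label). Starting at height h,
  an up step goes h -> h+1 with height h; a down step goes h -> h-1 (requires h > 0,
  so the path never goes below the x-axis) with height h-1. Labels range over 0..height.\<close>
fun lbp_valid :: "nat \<Rightarrow> (bool \<times> nat) list \<Rightarrow> bool" where
  "lbp_valid h [] = True"
| "lbp_valid h ((up, l) # s) =
     (if up then l \<le> h \<and> lbp_valid (h + 1) s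
      else 0 < h \<and> l \<le> h - 1 \<and> lbp_valid (h - 1) s)"

fun lbp_end :: "nat \<Rightarrow> (bool \<times> nat) list \<Rightarrow> nat" where
  "lbp_end h [] = h"
| "lbp_end h ((up, l) # s) = lbp_end (if up then h + 1 else h - 1) s"

definition B :: "nat \<Rightarrow> nat \<Rightarrow> nat" where
  "B n k = card {s. length s = n \<and> lbp_valid 0 s \<and> lbp_end 0 s = k}"

end

theory Submission
  imports Defs
begin

lemma lbp_append:
  "lbp_valid h (s @ [(u,l)]) = (lbp_valid h s \<and> (if u then l \<le> lbp_end h s else 0 < lbp_end h s \<and> l \<le> lbp_end h s - 1))"
  "lbp_end h (s @ [(u,l)]) = (if u then lbp_end h s + 1 else lbp_end h s - 1)"
  by (induction s arbitrary: h) auto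

lemma lbp_label_bound: "lbp_valid h s \<Longrightarrow> (u,l) \<in> set s \<Longrightarrow> l \<le> h + length s"
proof (induction s arbitrary: h)
  case Nil then show ?case by simp
next
  case (Cons a s)
  obtain u' l' where a: "a = (u',l')" by (cases a)
  show ?case
  proof (cases "(u,l) = a")
    case True then show ?thesis using Cons.prems a by (auto split: if_splits)
  next
    case False
    then have "(u,l) \<in> set s" using Cons.prems by auto
    then show ?thesis using Cons a by (force split: if_splits)
  qed
qed

definition PS :: "nat \<Rightarrow> nat \<Rightarrow> (bool \<times> nat) list set" where
  "PS n k = {s. length s = n \<and> lbp_valid 0 s \<and> lbp_end 0 s = k}"

lemma PS_finite: "finite (PS n k)"
proof -
  have "PS n k \<subseteq> {s. set s \<subseteq> UNIV \<times> {0..n} \<and> length s = n}"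
    unfolding PS_def using lbp_label_bound[where h=0] by fastforce
  moreover have "finite {s. set s \<subseteq> (UNIV::bool set) \<times> {0..n} \<and> length s = n}"
    by (rule finite_lists_length_eq) simp
  ultimately show ?thesis by (rule finite_subset)
qed

lemma PS_Suc: "PS (Suc n) k =
   (\<lambda>(s,l). s @ [(True,l)]) ` (PS n (k - 1) \<times> {0..<k}) \<union>
   (\<lambda>(s,l). s @ [(False,l)]) ` (PS n (k + 1) \<times> {0..k})"
proof (rule set_eqI)
  fix t
  show "t \<in> PS (Suc n) k \<longleftrightarrow> t \<in> (\<lambda>(s,l). s @ [(True,l)]) ` (PS n (k - 1) \<times> {0..<k}) \<union>
   (\<lambda>(s,l). s @ [(False,l)]) ` (PS n (k + 1) \<times> {0..k})"
  proof
    assume t: "t \<in> PS (Suc n) k"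
    then have "t \<noteq> []" by (auto simp: PS_def)
    then obtain s u l where ts: "t = s @ [(u,l)]" by (metis prod.exhaust rev_exhaust)
    show "t \<in> (\<lambda>(s,l). s @ [(True,l)]) ` (PS n (k - 1) \<times> {0..<k}) \<union>
   (\<lambda>(s,l). s @ [(False,l)]) ` (PS n (k + 1) \<times> {0..k})"
    proof (cases u)
      case True
      then have "(s,l) \<in> PS n (k - 1) \<times> {0..<k}" using t ts by (auto simp: PS_def lbp_append)
      then show ?thesis using ts True by force
    next
      case False
      then have "(s,l) \<in> PS n (k + 1) \<times> {0..k}" using t ts by (auto simp: PS_def lbp_append)
      then show ?thesis using ts False by force
    qed
  next
    assume "t \<in> (\<lambda>(s,l). s @ [(True,l)]) ` (PS n (k - 1) \<times> {0..<k}) \<union>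
   (\<lambda>(s,l). s @ [(False,l)]) ` (PS n (k + 1) \<times> {0..k})"
    then show "t \<in> PS (Suc n) k" by (auto simp: PS_def lbp_append)
  qed
qed

lemma B_Suc: "B (Suc n) k = k * B n (k - 1) + (k + 1) * B n (k + 1)"
proof -
  let ?A = "(\<lambda>(s,l). s @ [(True,l)]) ` (PS n (k - 1) \<times> {0..<k})"
  let ?C = "(\<lambda>(s,l). s @ [(False,l)]) ` (PS n (k + 1) \<times> {0..k})"
  have fin: "finite ?A" "finite ?C" using PS_finite by auto
  have disj: "?A \<inter> ?C = {}" by auto
  have i1: "inj_on (\<lambda>(s,l). s @ [(True,l)]) (PS n (k - 1) \<times> {0..<k})"
    by (auto simp: inj_on_def)
  have i2: "inj_on (\<lambda>(s,l). s @ [(False,l)]) (PS n (k + 1) \<times> {0..k})"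
    by (auto simp: inj_on_def)
  have "B (Suc n) k = card (?A \<union> ?C)" unfolding B_def using PS_Suc[of n k] by (simp add: PS_def)
  also have "\<dots> = card ?A + card ?C" using fin disj by (rule card_Un_disjoint)
  also have "card ?A = B n (k - 1) * k" using card_image[OF i1] by (simp add: card_cartesian_product B_def PS_def)
  also have "card ?C = B n (k + 1) * (k + 1)" using card_image[OF i2] by (simp add: card_cartesian_product B_def PS_def)
  finally show ?thesis by simp
qed

lemma B_0: "B 0 k = (if k = 0 then 1 else 0)"
proof -
  have "{s. length s = 0 \<and> lbp_valid 0 s \<and> lbp_end 0 s = k} = (if k = 0 then {[]} else {})" by auto
  then show ?thesis by (simp add: B_def)
qed

definition inc :: "int \<Rightarrow> int" where "inc y = y + sgn y"

definition ins :: "int list \<Rightarrow> nat \<Rightarrow> int \<Rightarrow> int list" where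
  "ins s j x = map inc (take j s) @ x # map (\<lambda>y. - inc y) (drop j s)"

lemma ins_length[simp]: "j \<le> length s \<Longrightarrow> length (ins s j x) = Suc (length s)"
  by (simp add: ins_def)

lemma ins_nth: "j \<le> length s \<Longrightarrow> i < Suc (length s) \<Longrightarrow>
  ins s j x ! i = (if i < j then inc (s!i) else if i = j then x else - inc (s!(i-1)))"
  apply (auto simp: ins_def nth_append min_def nth_Cons split: nat.splits)
  apply (subgoal_tac "j + x2 = i - Suc 0")
   apply simp
  apply arith
  done

fun Elist :: "bool \<Rightarrow> int list \<Rightarrow> int list" where
  "Elist b [] = []"
| "Elist b (y # r) = (if b then sgn y else - sgn y) # Elist (\<not> b) r"

lemma Elist_length[simp]: "length (Elist b l) = length l"
  by (induction l arbitrary: b) auto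

lemma Elist_nth: "i < length l \<Longrightarrow> Elist b l ! i = (if even i = b then sgn (l!i) else - sgn (l!i))"
  by (induction l arbitrary: b i) (auto simp: nth_Cons split: nat.splits)

lemma Elist_append: "Elist b (xs @ ys) = Elist b xs @ Elist (if even (length xs) then b else \<not> b) ys"
  by (induction xs arbitrary: b) auto

lemma sgn_inc[simp]: "sgn (inc y) = sgn y"
  by (auto simp: inc_def sgn_if)

lemma Elist_inc: "Elist b (map inc l) = Elist b l"
  by (induction l arbitrary: b) auto

lemma Elist_neg_inc: "sum_list (Elist b (map (\<lambda>y. - inc y) l)) = sum_list (Elist (\<not> b) l)"
  by (induction l arbitrary: b) (auto simp: sgn_minus)

lemma card_less_filter: "int (card {i. i < (L::nat) \<and> Q i}) = (\<Sum>i<L. if Q i then 1 else 0)"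
proof (induction L)
  case 0 then show ?case by simp
next
  case (Suc L)
  have "{i. i < Suc L \<and> Q i} = {i. i < L \<and> Q i} \<union> (if Q L then {L} else {})" by (auto simp: less_Suc_eq)
  moreover have "finite {i. i < L \<and> Q i}" by simp
  ultimately have "card {i. i < Suc L \<and> Q i} = card {i. i < L \<and> Q i} + (if Q L then 1 else 0)"
    by (auto simp: card_insert_if)
  then show ?case using Suc by simp
qed

lemma alpha_Elist: "alpha p = sum_list (Elist True p)"
proof -
  have "sum_list (Elist True p) = (\<Sum>i<length p. Elist True p ! i)"
    by (simp add: sum_list_sum_nth atLeast0LessThan)
  also have "\<dots> = (\<Sum>i<length p. (if even i then sgn (p!i) else - sgn (p!i)))"
    by (rule sum.cong) (auto simp: Elist_nth)
  also have "\<dots> = (\<Sum>i<length p. (if even i \<and> p!i > 0 then 1 else 0) + (if odd i \<and> p!i < 0 then 1 else 0)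
     - (if even i \<and> p!i < 0 then 1 else 0) - (if odd i \<and> p!i > 0 then 1 else 0))"
    by (rule sum.cong) (auto simp: sgn_if)
  also have "\<dots> = alpha p"
    by (simp add: alpha_def card_less_filter sum.distrib sum_subtractf)
  finally show ?thesis by simp
qed

lemma if_TF: "(if P then True else False) = P" by simp

lemma alpha_ins: "j \<le> length s \<Longrightarrow> alpha (ins s j x) = alpha s + (if even j then sgn x else - sgn x)"
proof -
  assume j: "j \<le> length s"
  have "alpha s = sum_list (Elist True (take j s @ drop j s))" by (simp add: alpha_Elist)
  also have "\<dots> = sum_list (Elist True (take j s)) + sum_list (Elist (if even (length (take j s)) then True else \<not> True) (drop j s))"
    by (simp only: Elist_append sum_list_append)
  also have "\<dots> = sum_list (Elist True (take j s)) + sum_list (Elist (even j) (drop j s))"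
    using j by (simp only: length_take min_absorb2 if_True simp_thms if_TF)
  finally have a: "alpha s = sum_list (Elist True (take j s)) + sum_list (Elist (even j) (drop j s))" .
  have "alpha (ins s j x) = sum_list (Elist True (take j s)) + (if even j then sgn x else - sgn x)
      + sum_list (Elist (\<not> even j) (map (\<lambda>y. - inc y) (drop j s)))"
  proof -
    have "alpha (ins s j x) = sum_list (Elist True (map inc (take j s))) + sum_list (Elist (if even (length (map inc (take j s))) then True else \<not> True) (x # map (\<lambda>y. - inc y) (drop j s)))"
      unfolding alpha_Elist ins_def by (simp only: Elist_append sum_list_append)
    moreover have "length (map inc (take j s)) = j" using j by simp
    ultimately have "alpha (ins s j x) = sum_list (Elist True (take j s)) + sum_list (Elist (even j) (x # map (\<lambda>y. - inc y) (drop j s)))"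
      by (simp only: Elist_inc if_True simp_thms if_TF)
    then show ?thesis by simp
  qed
  then show ?thesis using a by (simp add: Elist_neg_inc)
qed

lemma inc_less_iff[simp]: "inc a < inc b \<longleftrightarrow> a < b"
  by (auto simp: inc_def sgn_if)

definition alt :: "int list \<Rightarrow> bool" where
  "alt p \<longleftrightarrow> (0 < length p \<longrightarrow> 0 < p!0) \<and>
     (\<forall>i. i + 1 < length p \<longrightarrow> (if even i then p ! i > p ! (i+1) else p ! i < p ! (i+1)))"

lemma snake_alt: "snake n p \<longleftrightarrow> signed_perm n p \<and> alt p"
  by (auto simp: snake_def alt_def signed_perm_def)

lemma alt_step: "alt p \<Longrightarrow> i + 1 < length p \<Longrightarrow> (if even i then p ! i > p ! (i+1) else p ! i < p ! (i+1))"
  unfolding alt_def by blast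

definition V :: "int list \<Rightarrow> nat \<Rightarrow> int \<Rightarrow> bool" where
  "V s j x \<longleftrightarrow> (if j = 0 then 0 < x else if even j then inc (s!(j-1)) < x else x < inc (s!(j-1))) \<and>
      (j < length s \<longrightarrow> (if even j then - inc (s!j) < x else x < - inc (s!j)))"

lemma alt_ins_imp:
  assumes j: "j \<le> length s" and a: "alt s" and v: "V s j x"
  shows "alt (ins s j x)"
proof -
  let ?p = "ins s j x"
  have n: "\<And>i. i < Suc (length s) \<Longrightarrow> ?p ! i = (if i < j then inc (s!i) else if i = j then x else - inc (s!(i-1)))"
    using j by (rule ins_nth)
  have "0 < ?p ! 0"
  proof (cases "j = 0")
    case True then show ?thesis using n[of 0] v by (simp add: V_def)
  next
    case False
    then have "0 < length s" using j by linarith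
    then have "0 < s!0" using a by (simp add: alt_def)
    then show ?thesis using n[of 0] False by (simp add: inc_def sgn_if)
  qed
  moreover have "(if even i then ?p ! i > ?p ! (i+1) else ?p ! i < ?p ! (i+1))"
    if i: "i + 1 < length ?p" for i
  proof -
    have i': "i < length s" using i j by simp
    consider "i + 1 < j" | "i + 1 = j" | "i = j" | "j < i" by arith
    then show ?thesis
    proof cases
      case 1
      then have "(if even i then s ! i > s ! (i+1) else s ! i < s ! (i+1))"
        using a j by (intro alt_step) auto
      then show ?thesis using 1 n[of i] n[of "i+1"] i' by auto
    next
      case 2
      then show ?thesis using n[of i] n[of "i+1"] i' v by (auto simp: V_def)
    next
      case 3
      then show ?thesis using n[of i] n[of "i+1"] i' v by (auto simp: V_def)
    next
      case 4
      then obtain k where k: "i = Suc k" by (cases i) auto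
      have "(if even k then s ! k > s ! (k+1) else s ! k < s ! (k+1))"
        using a i' k by (intro alt_step) auto
      then show ?thesis using 4 k n[of i] n[of "i+1"] i' by auto
    qed
  qed
  ultimately show ?thesis unfolding alt_def by blast
qed

lemma alt_ins_rev:
  assumes j: "j \<le> length s" and x: "x = 1 \<or> x = -1" and nz: "0 \<notin> set s"
    and a: "alt (ins s j x)"
  shows "alt s \<and> V s j x"
proof -
  let ?p = "ins s j x"
  have n: "\<And>i. i < Suc (length s) \<Longrightarrow> ?p ! i = (if i < j then inc (s!i) else if i = j then x else - inc (s!(i-1)))"
    using j by (rule ins_nth)
  have lp: "length ?p = Suc (length s)" using j by simp
  have nzi: "\<And>i. i < length s \<Longrightarrow> s ! i \<noteq> 0" using nz by (metis nth_mem)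
  have ap: "\<And>i. i + 1 < Suc (length s) \<Longrightarrow> (if even i then ?p ! i > ?p ! (i+1) else ?p ! i < ?p ! (i+1))"
    using a lp by (intro alt_step) auto
  have v1: "(if j = 0 then 0 < x else if even j then inc (s!(j-1)) < x else x < inc (s!(j-1)))"
  proof (cases "j = 0")
    case True
    then show ?thesis using a n[of 0] lp by (simp add: alt_def)
  next
    case False
    then have "if even (j-1) then ?p ! (j-1) > ?p ! (j-1+1) else ?p ! (j-1) < ?p ! (j-1+1)"
      using ap[of "j-1"] j by simp
    moreover have "j - 1 + 1 = j" using False by simp
    ultimately show ?thesis using False n[of "j-1"] n[of j] j by auto
  qed
  have v2: "(j < length s \<longrightarrow> (if even j then - inc (s!j) < x else x < - inc (s!j)))"
  proof
    assume js: "j < length s"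
    then show "(if even j then - inc (s!j) < x else x < - inc (s!j))"
      using ap[of j] n[of j] n[of "j+1"] by auto
  qed
  have v: "V s j x" using v1 v2 by (simp add: V_def)
  have s0: "0 < s ! 0" if "0 < length s"
  proof (cases "j = 0")
    case True
    then have "- inc (s!0) < x" using v2 that by simp
    then show ?thesis using x nzi[of 0] that by (auto simp: inc_def sgn_if split: if_splits)
  next
    case False
    then have "0 < ?p ! 0" using a lp by (simp add: alt_def)
    then show ?thesis using n[of 0] False by (auto simp: inc_def sgn_if split: if_splits)
  qed
  have "(if even i then s ! i > s ! (i+1) else s ! i < s ! (i+1))"
    if i: "i + 1 < length s" for i
  proof -
    consider "i + 1 < j" | "i + 1 = j" | "j \<le> i" by arith
    then show ?thesis
    proof cases
      case 1
      then show ?thesis using ap[of i] n[of i] n[of "i+1"] i by auto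
    next
      case 2
      have "inc (s ! i) \<noteq> 0" "s ! (i+1) \<noteq> 0" using nzi i by (auto simp: inc_def sgn_if)
      then show ?thesis using 2 v1 v2 i x nzi[of i] nzi[of "i+1"]
        by (auto simp: inc_def sgn_if split: if_splits)
    next
      case 3
      then have "if even (i+1) then ?p ! (i+1) > ?p ! (i+1+1) else ?p ! (i+1) < ?p ! (i+1+1)"
        using ap[of "i+1"] i by simp
      then show ?thesis using 3 n[of "i+1"] n[of "i+2"] i by auto
    qed
  qed
  then have "alt s" using s0 unfolding alt_def by blast
  then show ?thesis using v by simp
qed

lemma abs_inc: "y \<noteq> 0 \<Longrightarrow> \<bar>inc y\<bar> = \<bar>y\<bar> + 1"
  by (auto simp: inc_def sgn_if)

lemma map_abs_ins:
  assumes j: "j \<le> length s" and nz: "0 \<notin> set s" and x: "x = 1 \<or> x = -1"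
  shows "map abs (ins s j x) = map (\<lambda>y. y + 1) (take j (map abs s)) @ 1 # map (\<lambda>y. y + 1) (drop j (map abs s))"
proof -
  have "\<And>y. y \<in> set s \<Longrightarrow> y \<noteq> 0" using nz by auto
  then have a: "\<And>y. y \<in> set (take j s) \<Longrightarrow> \<bar>inc y\<bar> = \<bar>y\<bar> + 1"
    and b: "\<And>y. y \<in> set (drop j s) \<Longrightarrow> \<bar>inc y\<bar> = \<bar>y\<bar> + 1"
    by (auto simp: abs_inc dest: in_set_takeD in_set_dropD)
  show ?thesis using x unfolding ins_def
    by (auto simp: take_map drop_map a b)
qed

lemma signed_perm_ins:
  assumes j: "j \<le> length s" and nz: "0 \<notin> set s" and x: "x = 1 \<or> x = -1"
  shows "signed_perm (Suc n) (ins s j x) \<longleftrightarrow> signed_perm n s"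
proof -
  let ?A = "map abs s"
  let ?f = "\<lambda>y::int. y + 1"
  have pos: "1 \<le> y" if yA: "y \<in> set ?A" for y
  proof -
    obtain z where z: "z \<in> set s" "y = \<bar>z\<bar>" using yA by auto
    then have "z \<noteq> 0" using nz by auto
    then show ?thesis using z by auto
  qed
  have m: "map abs (ins s j x) = map ?f (take j ?A) @ 1 # map ?f (drop j ?A)"
    using map_abs_ins[OF assms] .
  have d: "distinct (map abs (ins s j x)) \<longleftrightarrow> distinct ?A"
  proof -
    have d1: "distinct (map abs (ins s j x)) \<longleftrightarrow> 1 \<notin> set (map ?f (take j ?A) @ map ?f (drop j ?A)) \<and> distinct (map ?f (take j ?A) @ map ?f (drop j ?A))"
      unfolding m by auto
    have d2: "map ?f (take j ?A) @ map ?f (drop j ?A) = map ?f ?A"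
      by (simp only: map_append[symmetric] append_take_drop_id)
    have d3: "1 \<notin> set (map ?f ?A)" using pos by force
    have inj: "inj_on ?f (set ?A)" by (auto simp: inj_on_def)
    have d4: "distinct (map ?f ?A) \<longleftrightarrow> distinct ?A" using distinct_map[of ?f ?A] inj by blast
    show ?thesis using d1 d2 d3 d4 by simp
  qed
  have st: "set (map abs (ins s j x)) = insert 1 (?f ` set ?A)"
  proof -
    have "set (map abs (ins s j x)) = insert 1 (set (map ?f (take j ?A) @ map ?f (drop j ?A)))"
      unfolding m by auto
    also have "map ?f (take j ?A) @ map ?f (drop j ?A) = map ?f ?A"
      by (simp only: map_append[symmetric] append_take_drop_id)
    finally show ?thesis by (simp add: image_image)
  qed
  have se: "insert 1 (?f ` set ?A) = {1..int (Suc n)} \<longleftrightarrow> set ?A = {1..int n}"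
  proof
    assume h: "insert 1 (?f ` set ?A) = {1..int (Suc n)}"
    show "set ?A = {1..int n}"
    proof (rule set_eqI)
      fix y
      show "y \<in> set ?A \<longleftrightarrow> y \<in> {1..int n}"
      proof
        assume y: "y \<in> set ?A"
        then have "y + 1 \<in> {1..int (Suc n)}" using h by blast
        then show "y \<in> {1..int n}" using pos[OF y] by auto
      next
        assume y: "y \<in> {1..int n}"
        then have "y + 1 \<in> insert 1 (?f ` set ?A)" using h by auto
        then show "y \<in> set ?A" using y by auto
      qed
    qed
  next
    assume h: "set ?A = {1..int n}"
    show "insert 1 (?f ` set ?A) = {1..int (Suc n)}"
    proof (rule set_eqI)
      fix y :: int
      show "y \<in> insert 1 (?f ` set ?A) \<longleftrightarrow> y \<in> {1..int (Suc n)}"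
      proof
        assume "y \<in> insert 1 (?f ` set ?A)"
        then show "y \<in> {1..int (Suc n)}" using h by auto
      next
        assume y: "y \<in> {1..int (Suc n)}"
        show "y \<in> insert 1 (?f ` set ?A)"
        proof (cases "y = 1")
          case False
          then have "y - 1 \<in> set ?A" using h y by auto
          then have "?f (y - 1) \<in> ?f ` set ?A" by (rule imageI)
          then show ?thesis by simp
        qed simp
      qed
    qed
  qed
  show ?thesis
    unfolding signed_perm_def using j d st se by auto
qed

definition Z :: "int list \<Rightarrow> nat set" where
  "Z e = {j. j \<le> length e \<and> (0 < j \<longrightarrow> e!(j-1) = 1) \<and> (j < length e \<longrightarrow> e!j = 1)}"

definition nocons :: "int list \<Rightarrow> bool" where
  "nocons e \<longleftrightarrow> (\<forall>i. i + 1 < length e \<longrightarrow> \<not> (e!i = -1 \<and> e!(i+1) = -1))"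

lemma Z_Nil: "Z [] = {0}" by (auto simp: Z_def)

lemma Z_Cons: "Z (a # r) = (if a = 1 then {0} else {}) \<union> Suc ` {i \<in> Z r. i = 0 \<longrightarrow> a = 1}"
proof (rule set_eqI)
  fix j
  show "j \<in> Z (a # r) \<longleftrightarrow> j \<in> (if a = 1 then {0} else {}) \<union> Suc ` {i \<in> Z r. i = 0 \<longrightarrow> a = 1}"
  proof (cases j)
    case 0 then show ?thesis by (auto simp: Z_def)
  next
    case (Suc i)
    have "Suc i \<in> Z (a # r) \<longleftrightarrow> i \<in> Z r \<and> (i = 0 \<longrightarrow> a = 1)"
      by (cases i) (auto simp: Z_def)
    then show ?thesis using Suc by auto
  qed
qed

lemma nocons_Cons: "nocons (a # r) \<Longrightarrow> nocons r"
  unfolding nocons_def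
  by (metis Suc_eq_plus1 length_Cons not_less_eq nth_Cons_Suc)

lemma finite_Z: "finite (Z e)" unfolding Z_def by simp

lemma Z_card: "set e \<subseteq> {1, -1} \<Longrightarrow> nocons e \<Longrightarrow> int (card (Z e)) = sum_list e + 1"
proof (induction e)
  case Nil then show ?case by (simp add: Z_Nil)
next
  case (Cons a r)
  have r: "set r \<subseteq> {1,-1}" "nocons r" using Cons.prems nocons_Cons by auto
  have IH: "int (card (Z r)) = sum_list r + 1" using Cons.IH r by simp
  have fin: "finite {i \<in> Z r. i = 0 \<longrightarrow> a = 1}" using finite_Z by simp
  show ?case
  proof (cases "a = 1")
    case True
    then have "Z (a # r) = insert 0 (Suc ` Z r)" by (simp add: Z_Cons)
    then have "card (Z (a # r)) = Suc (card (Z r))"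
      using finite_Z by (simp add: card_image)
    then show ?thesis using IH True by simp
  next
    case False
    then have a: "a = -1" using Cons.prems by auto
    have "0 \<in> Z r"
    proof (cases r)
      case Nil then show ?thesis by (simp add: Z_Nil)
    next
      case (Cons b r')
      have "b \<noteq> -1" using Cons.prems(2) a Cons unfolding nocons_def by force
      then have "b = 1" using r Cons by auto
      then show ?thesis using Cons by (simp add: Z_def)
    qed
    have "Z (a # r) = Suc ` (Z r - {0})" using False by (auto simp: Z_Cons)
    then have "card (Z (a # r)) = card (Z r) - 1"
      using finite_Z \<open>0 \<in> Z r\<close> by (simp add: card_image)
    moreover have "card (Z r) \<ge> 1" using finite_Z \<open>0 \<in> Z r\<close>
      by (metis One_nat_def Suc_leI card_gt_0_iff empty_iff)
    ultimately show ?thesis using IH a by simp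
  qed
qed

lemma VZ:
  assumes j: "j \<le> length s" and nz: "0 \<notin> set s" and x: "x = 1 \<or> x = -1"
  shows "V s j x \<longleftrightarrow> (j = 0 \<longrightarrow> x = 1) \<and> j \<in> Z (Elist True s)"
proof -
  have nzi: "\<And>i. i < length s \<Longrightarrow> s ! i \<noteq> 0" using nz by (metis nth_mem)
  have e1: "Elist True s ! (j-1) = (if even (j-1) then sgn (s!(j-1)) else - sgn (s!(j-1)))" if "0 < j"
    using j that by (simp add: Elist_nth)
  have e2: "Elist True s ! j = (if even j then sgn (s!j) else - sgn (s!j))" if "j < length s"
    using that by (simp add: Elist_nth)
  have A: "(if j = 0 then 0 < x else if even j then inc (s!(j-1)) < x else x < inc (s!(j-1)))
       \<longleftrightarrow> (j = 0 \<longrightarrow> x = 1) \<and> (0 < j \<longrightarrow> Elist True s ! (j-1) = 1)"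
  proof (cases "j = 0")
    case True then show ?thesis using x by auto
  next
    case False
    then have "s!(j-1) \<noteq> 0" using nzi j by simp
    then show ?thesis using False e1 x by (auto simp: inc_def sgn_if)
  qed
  have B: "(j < length s \<longrightarrow> (if even j then - inc (s!j) < x else x < - inc (s!j)))
       \<longleftrightarrow> (j < length s \<longrightarrow> Elist True s ! j = 1)"
  proof (cases "j < length s")
    case True
    then have "s!j \<noteq> 0" using nzi by simp
    then show ?thesis using True e2 x by (auto simp: inc_def sgn_if)
  qed simp
  show ?thesis unfolding V_def A B Z_def using j by auto
qed

lemma snake_props:
  assumes "snake n s" shows "length s = n" "0 \<notin> set s" "alt s" "signed_perm n s"
proof -
  show sp: "signed_perm n s" "alt s" using assms by (auto simp: snake_alt)
  then show "length s = n" by (simp add: signed_perm_def)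
  have "0 \<notin> set (map abs s)" using sp by (simp add: signed_perm_def)
  then show "0 \<notin> set s" by force
qed

lemma snake_E:
  assumes "snake n s"
  shows "set (Elist True s) \<subseteq> {1, -1}" "nocons (Elist True s)" "0 \<in> Z (Elist True s)"
proof -
  have nz: "0 \<notin> set s" and a: "alt s" using snake_props[OF assms] by auto
  have nzi: "\<And>i. i < length s \<Longrightarrow> s ! i \<noteq> 0" using nz by (metis nth_mem)
  show "set (Elist True s) \<subseteq> {1, -1}"
  proof
    fix y assume "y \<in> set (Elist True s)"
    then obtain i where i: "i < length s" "y = Elist True s ! i" by (auto simp: in_set_conv_nth)
    then show "y \<in> {1, -1}" using nzi[OF i(1)] by (auto simp: Elist_nth sgn_if)
  qed
  show "nocons (Elist True s)" unfolding nocons_def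
  proof (intro allI impI)
    fix i assume i: "i + 1 < length (Elist True s)"
    then have "(if even i then s ! i > s ! (i+1) else s ! i < s ! (i+1))"
      using a by (intro alt_step) auto
    then show "\<not> (Elist True s ! i = -1 \<and> Elist True s ! (i+1) = -1)"
      using i by (auto simp: Elist_nth sgn_if split: if_splits)
  qed
  show "0 \<in> Z (Elist True s)"
  proof -
    have "0 < length s \<Longrightarrow> 0 < s ! 0" using a by (simp add: alt_def)
    then show ?thesis by (auto simp: Z_def Elist_nth)
  qed
qed

definition c :: "nat \<Rightarrow> int \<Rightarrow> int" where "c j x = (if even j then sgn x else - sgn x)"

lemma CP_eq:
  assumes "snake n s"
  shows "{(j,x). j \<le> n \<and> (x = 1 \<or> x = -1) \<and> V s j x \<and> c j x = 1} = (\<lambda>j. (j, if even j then 1 else -1)) ` Z (Elist True s)"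
proof -
  have l: "length s = n" and nz: "0 \<notin> set s" using snake_props[OF assms] by auto
  have zl: "\<And>j. j \<in> Z (Elist True s) \<Longrightarrow> j \<le> n" using l by (auto simp: Z_def)
  show ?thesis
  proof (rule set_eqI)
    fix jx :: "nat \<times> int"
    obtain j x where jx: "jx = (j,x)" by (cases jx)
    show "jx \<in> {(j,x). j \<le> n \<and> (x = 1 \<or> x = -1) \<and> V s j x \<and> c j x = 1} \<longleftrightarrow> jx \<in> (\<lambda>j. (j, if even j then 1 else -1)) ` Z (Elist True s)"
    proof
      assume "jx \<in> {(j,x). j \<le> n \<and> (x = 1 \<or> x = -1) \<and> V s j x \<and> c j x = 1}"
      then have h: "j \<le> n" "x = 1 \<or> x = -1" "V s j x" "c j x = 1" using jx by auto
      then have "j \<in> Z (Elist True s)" using VZ[of j s x] l nz by auto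
      moreover have "x = (if even j then 1 else -1)" using h(2,4) by (auto simp: c_def)
      ultimately show "jx \<in> (\<lambda>j. (j, if even j then 1 else -1)) ` Z (Elist True s)" using jx by auto
    next
      assume "jx \<in> (\<lambda>j. (j, if even j then 1 else -1)) ` Z (Elist True s)"
      then have h: "j \<in> Z (Elist True s)" "x = (if even j then 1 else -1)" using jx by auto
      then have "V s j x" using VZ[of j s x] l nz zl[OF h(1)] by auto
      then show "jx \<in> {(j,x). j \<le> n \<and> (x = 1 \<or> x = -1) \<and> V s j x \<and> c j x = 1}"
        using h zl[OF h(1)] jx by (auto simp: c_def)
    qed
  qed
qed

lemma CM_eq:
  assumes "snake n s"
  shows "{(j,x). j \<le> n \<and> (x = 1 \<or> x = -1) \<and> V s j x \<and> c j x = -1} = (\<lambda>j. (j, if even j then -1 else 1)) ` (Z (Elist True s) - {0})"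
proof -
  have l: "length s = n" and nz: "0 \<notin> set s" using snake_props[OF assms] by auto
  have zl: "\<And>j. j \<in> Z (Elist True s) \<Longrightarrow> j \<le> n" using l by (auto simp: Z_def)
  show ?thesis
  proof (rule set_eqI)
    fix jx :: "nat \<times> int"
    obtain j x where jx: "jx = (j,x)" by (cases jx)
    show "jx \<in> {(j,x). j \<le> n \<and> (x = 1 \<or> x = -1) \<and> V s j x \<and> c j x = -1} \<longleftrightarrow> jx \<in> (\<lambda>j. (j, if even j then -1 else 1)) ` (Z (Elist True s) - {0})"
    proof
      assume "jx \<in> {(j,x). j \<le> n \<and> (x = 1 \<or> x = -1) \<and> V s j x \<and> c j x = -1}"
      then have h: "j \<le> n" "x = 1 \<or> x = -1" "V s j x" "c j x = -1" using jx by auto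
      then have z: "j \<in> Z (Elist True s)" "j = 0 \<longrightarrow> x = 1" using VZ[of j s x] l nz by auto
      moreover have "x = (if even j then -1 else 1)" using h(2,4) by (auto simp: c_def)
      ultimately show "jx \<in> (\<lambda>j. (j, if even j then -1 else 1)) ` (Z (Elist True s) - {0})" using jx by auto
    next
      assume "jx \<in> (\<lambda>j. (j, if even j then -1 else 1)) ` (Z (Elist True s) - {0})"
      then have h: "j \<in> Z (Elist True s)" "j \<noteq> 0" "x = (if even j then -1 else 1)" using jx by auto
      then have "V s j x" using VZ[of j s x] l nz zl[OF h(1)] by auto
      then show "jx \<in> {(j,x). j \<le> n \<and> (x = 1 \<or> x = -1) \<and> V s j x \<and> c j x = -1}"
        using h zl[OF h(1)] jx by (auto simp: c_def)
    qed
  qed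
qed

lemma card_CP:
  assumes "snake n s"
  shows "int (card {(j,x). j \<le> n \<and> (x = 1 \<or> x = -1) \<and> V s j x \<and> c j x = 1}) = alpha s + 1"
proof -
  have "inj_on (\<lambda>j. (j, if even j then 1 else -1::int)) (Z (Elist True s))" by (auto simp: inj_on_def)
  then have "card {(j,x). j \<le> n \<and> (x = 1 \<or> x = -1) \<and> V s j x \<and> c j x = 1} = card (Z (Elist True s))"
    unfolding CP_eq[OF assms] by (rule card_image)
  then show ?thesis using Z_card snake_E[OF assms] by (simp add: alpha_Elist)
qed

lemma card_CM:
  assumes "snake n s"
  shows "int (card {(j,x). j \<le> n \<and> (x = 1 \<or> x = -1) \<and> V s j x \<and> c j x = -1}) = alpha s"
proof -
  have "inj_on (\<lambda>j. (j, if even j then -1 else 1::int)) (Z (Elist True s) - {0})" by (auto simp: inj_on_def)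
  then have "card {(j,x). j \<le> n \<and> (x = 1 \<or> x = -1) \<and> V s j x \<and> c j x = -1} = card (Z (Elist True s) - {0})"
    unfolding CM_eq[OF assms] by (rule card_image)
  also have "\<dots> = card (Z (Elist True s)) - 1" using snake_E(3)[OF assms] finite_Z by simp
  finally have "card {(j,x). j \<le> n \<and> (x = 1 \<or> x = -1) \<and> V s j x \<and> c j x = -1} = card (Z (Elist True s)) - 1" .
  moreover have "card (Z (Elist True s)) \<ge> 1" using snake_E(3)[OF assms] finite_Z
    by (metis One_nat_def Suc_leI card_gt_0_iff empty_iff)
  ultimately show ?thesis using Z_card snake_E[OF assms] by (simp add: alpha_Elist of_nat_diff)
qed

definition dec :: "int \<Rightarrow> int" where "dec y = y - sgn y"

lemma inc_dec: "2 \<le> \<bar>y\<bar> \<Longrightarrow> inc (dec y) = y"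
  by (auto simp: inc_def dec_def sgn_if)

lemma inc_eq_iff[simp]: "inc a = inc b \<longleftrightarrow> a = b"
  by (metis inc_less_iff not_less_iff_gr_or_eq)

lemma abs_ins_nth_one:
  assumes j: "j \<le> length s" and nz: "0 \<notin> set s" and x: "x = 1 \<or> x = -1" and i: "i < Suc (length s)"
  shows "\<bar>ins s j x ! i\<bar> = 1 \<longleftrightarrow> i = j"
proof -
  have nzi: "\<And>i. i < length s \<Longrightarrow> s ! i \<noteq> 0" using nz by (metis nth_mem)
  show ?thesis
  proof (cases "i < j")
    case True
    then have "s ! i \<noteq> 0" using nzi j by simp
    then show ?thesis using True ins_nth[OF j i] by (simp add: abs_inc)
  next
    case False
    show ?thesis
    proof (cases "i = j")
      case True then show ?thesis using ins_nth[OF j i] x by auto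
    next
      case F2: False
      then have "s ! (i-1) \<noteq> 0" using nzi i False by simp
      then show ?thesis using F2 False ins_nth[OF j i] by (simp add: abs_inc)
    qed
  qed
qed

lemma ins_inj:
  assumes l: "length s = n" "length s' = n" and nz: "0 \<notin> set s" "0 \<notin> set s'"
    and j: "j \<le> n" "j' \<le> n" and x: "x = 1 \<or> x = -1" "x' = 1 \<or> x' = -1"
    and eq: "ins s j x = ins s' j' x'"
  shows "s = s' \<and> j = j' \<and> x = x'"
proof -
  have "\<bar>ins s j x ! j\<bar> = 1" using abs_ins_nth_one[of j s x j] l j nz x by simp
  then have "\<bar>ins s' j' x' ! j\<bar> = 1" using eq by simp
  then have jj: "j = j'" using abs_ins_nth_one[of j' s' x' j] l j nz x by simp
  have xx: "x = x'" using eq ins_nth[of j s j x] ins_nth[of j' s' j x'] l j jj by simp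
  have "s = s'"
  proof (rule nth_equalityI)
    show "length s = length s'" using l by simp
  next
    fix i assume i: "i < length s"
    show "s ! i = s' ! i"
    proof (cases "i < j")
      case True
      then show ?thesis using eq ins_nth[of j s i x] ins_nth[of j' s' i x'] l j jj i by simp
    next
      case False
      then show ?thesis using eq ins_nth[of j s "Suc i" x] ins_nth[of j' s' "Suc i" x'] l j jj i by simp
    qed
  qed
  then show ?thesis using jj xx by simp
qed

lemma ins_surj:
  assumes p: "snake (Suc n) p"
  shows "\<exists>s j x. snake n s \<and> j \<le> n \<and> (x = 1 \<or> x = -1) \<and> V s j x \<and> p = ins s j x"
proof -
  have lp: "length p = Suc n" and sp: "signed_perm (Suc n) p" and ap: "alt p"
    using snake_props[OF p] by auto
  have d: "distinct (map abs p)" and st: "set (map abs p) = {1..int (Suc n)}"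
    using sp by (auto simp: signed_perm_def)
  have "1 \<in> set (map abs p)" using st by simp
  then obtain j where j: "j < Suc n" "\<bar>p ! j\<bar> = 1" using lp by (auto simp: in_set_conv_nth)
  have big: "2 \<le> \<bar>p ! i\<bar>" if i: "i < Suc n" "i \<noteq> j" for i
  proof -
    have "map abs p ! i \<in> set (map abs p)" using i lp by (intro nth_mem) simp
    then have "\<bar>p ! i\<bar> \<in> set (map abs p)" using i lp by simp
    then have "1 \<le> \<bar>p ! i\<bar>" using st by auto
    moreover have "map abs p ! i \<noteq> map abs p ! j"
      using nth_eq_iff_index_eq[OF d, of i j] i j lp by simp
    ultimately show ?thesis using j i lp by auto
  qed
  define x where "x = p ! j"
  have x: "x = 1 \<or> x = -1" using j by (auto simp: x_def)
  define s where "s = map dec (take j p) @ map (\<lambda>y. dec (- y)) (drop (Suc j) p)"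
  have ls: "length s = n" using j lp by (simp add: s_def)
  have snth: "s ! i = (if i < j then dec (p ! i) else dec (- (p ! Suc i)))" if i: "i < n" for i
    using i j lp by (auto simp: s_def nth_append)
  have nz: "0 \<notin> set s"
  proof
    assume "0 \<in> set s"
    then obtain i where i: "i < n" "s ! i = 0" using ls by (auto simp: in_set_conv_nth)
    show False
    proof (cases "i < j")
      case True
      then have "2 \<le> \<bar>p ! i\<bar>" using big i by simp
      then show False using i True snth by (auto simp: dec_def sgn_if split: if_splits)
    next
      case False
      then have "2 \<le> \<bar>p ! Suc i\<bar>" using big i by simp
      then show False using i False snth by (auto simp: dec_def sgn_if split: if_splits)
    qed
  qed
  have jl: "j \<le> length s" using j ls by simp
  have eq: "ins s j x = p"
  proof (rule nth_equalityI)
    show "length (ins s j x) = length p" using jl ls lp by simp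
  next
    fix i assume "i < length (ins s j x)"
    then have i: "i < Suc n" using jl ls by simp
    show "ins s j x ! i = p ! i"
    proof (cases "i < j")
      case True
      then show ?thesis using ins_nth[OF jl] i ls snth[of i] big[of i] j by (simp add: inc_dec)
    next
      case False
      show ?thesis
      proof (cases "i = j")
        case True then show ?thesis using ins_nth[OF jl] i ls x_def by simp
      next
        case F2: False
        then obtain k where k: "i = Suc k" using False by (cases i) auto
        have "2 \<le> \<bar>- (p ! i)\<bar>" using big[of i] i F2 by simp
        then show ?thesis using ins_nth[OF jl] i ls snth[of k] k False F2 by (simp add: inc_dec)
      qed
    qed
  qed
  have "signed_perm (Suc n) (ins s j x)" using sp eq by simp
  then have sps: "signed_perm n s" using signed_perm_ins[OF jl nz x] by simp
  have "alt (ins s j x)" using ap eq by simp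
  then have "alt s \<and> V s j x" using alt_ins_rev[OF jl x nz] by simp
  then have "snake n s \<and> j \<le> n \<and> (x = 1 \<or> x = -1) \<and> V s j x \<and> p = ins s j x"
    using sps eq x j by (auto simp: snake_alt)
  then show ?thesis by blast
qed

definition K :: "nat \<Rightarrow> int \<Rightarrow> int list \<Rightarrow> (nat \<times> int) set" where
  "K n k s = {(j,x). j \<le> n \<and> (x = 1 \<or> x = -1) \<and> V s j x \<and> alpha s + c j x = k}"

lemma finite_snakes: "finite {s. snake n s}"
proof -
  have "{s. snake n s} \<subseteq> {s. set s \<subseteq> {- int n..int n} \<and> length s = n}"
  proof
    fix s assume "s \<in> {s. snake n s}"
    then have sp: "signed_perm n s" by (simp add: snake_alt)
    then have "\<forall>y\<in>set s. \<bar>y\<bar> \<in> {1..int n}" by (auto simp: signed_perm_def)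
    then show "s \<in> {s. set s \<subseteq> {- int n..int n} \<and> length s = n}"
      using sp by (force simp: signed_perm_def)
  qed
  moreover have "finite {s. set s \<subseteq> {- int n..int n} \<and> length s = n}"
    by (rule finite_lists_length_eq) simp
  ultimately show ?thesis by (rule finite_subset)
qed

lemma finite_K: "finite (K n k s)"
proof -
  have "K n k s \<subseteq> {0..n} \<times> {1, -1}" by (auto simp: K_def)
  then show ?thesis by (rule finite_subset) simp
qed

lemma T_eq: "{p. snake (Suc n) p \<and> alpha p = k} = (\<lambda>(s,j,x). ins s j x) ` (SIGMA s:{s. snake n s}. K n k s)"
proof (rule set_eqI)
  fix p
  show "p \<in> {p. snake (Suc n) p \<and> alpha p = k} \<longleftrightarrow> p \<in> (\<lambda>(s,j,x). ins s j x) ` (SIGMA s:{s. snake n s}. K n k s)"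
  proof
    assume "p \<in> {p. snake (Suc n) p \<and> alpha p = k}"
    then have p: "snake (Suc n) p" "alpha p = k" by auto
    obtain s j x where h: "snake n s" "j \<le> n" "x = 1 \<or> x = -1" "V s j x" "p = ins s j x"
      using ins_surj[OF p(1)] by blast
    have "alpha p = alpha s + c j x" using h snake_props(1)[OF h(1)] by (simp add: alpha_ins c_def)
    then have "(j,x) \<in> K n k s" using h p(2) by (simp add: K_def)
    then show "p \<in> (\<lambda>(s,j,x). ins s j x) ` (SIGMA s:{s. snake n s}. K n k s)"
      using h by force
  next
    assume "p \<in> (\<lambda>(s,j,x). ins s j x) ` (SIGMA s:{s. snake n s}. K n k s)"
    then obtain s j x where h: "snake n s" "(j,x) \<in> K n k s" "p = ins s j x" by auto
    have l: "length s = n" and nz: "0 \<notin> set s" and a: "alt s" and sp: "signed_perm n s"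
      using snake_props[OF h(1)] by auto
    have k: "j \<le> n" "x = 1 \<or> x = -1" "V s j x" "alpha s + c j x = k" using h(2) by (auto simp: K_def)
    have jl: "j \<le> length s" using k l by simp
    have "signed_perm (Suc n) p" using signed_perm_ins[OF jl nz k(2)] sp h(3) by simp
    moreover have "alt p" using alt_ins_imp[OF jl a k(3)] h(3) by simp
    moreover have "alpha p = k" using alpha_ins[OF jl] k(4) h(3) by (simp add: c_def)
    ultimately show "p \<in> {p. snake (Suc n) p \<and> alpha p = k}" by (simp add: snake_alt)
  qed
qed

lemma inj_T: "inj_on (\<lambda>(s,j,x). ins s j x) (SIGMA s:{s. snake n s}. K n k s)"
proof (rule inj_onI)
  fix a b assume a: "a \<in> (SIGMA s:{s. snake n s}. K n k s)" and b: "b \<in> (SIGMA s:{s. snake n s}. K n k s)"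
    and e: "(\<lambda>(s,j,x). ins s j x) a = (\<lambda>(s,j,x). ins s j x) b"
  obtain s j x where as: "a = (s,j,x)" by (cases a) auto
  obtain s' j' x' where bs: "b = (s',j',x')" by (cases b) auto
  have h: "snake n s" "j \<le> n" "x = 1 \<or> x = -1" using a as by (auto simp: K_def)
  have h': "snake n s'" "j' \<le> n" "x' = 1 \<or> x' = -1" using b bs by (auto simp: K_def)
  have "s = s' \<and> j = j' \<and> x = x'"
    using ins_inj[of s n s' j j' x x'] snake_props[OF h(1)] snake_props[OF h'(1)] h h' e as bs by simp
  then show "a = b" using as bs by simp
qed

lemma card_K:
  assumes "snake n s"
  shows "int (card (K n k s)) = (if alpha s = k - 1 then k else 0) + (if alpha s = k + 1 then k + 1 else 0)"
proof -
  have cx: "\<And>j x. x = 1 \<or> x = -1 \<Longrightarrow> c j x = 1 \<or> c j x = -1" by (auto simp: c_def)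
  consider "alpha s = k - 1" | "alpha s = k + 1" | "alpha s \<noteq> k - 1" "alpha s \<noteq> k + 1" by blast
  then show ?thesis
  proof cases
    case 1
    then have "K n k s = {(j,x). j \<le> n \<and> (x = 1 \<or> x = -1) \<and> V s j x \<and> c j x = 1}"
      by (auto simp: K_def)
    then show ?thesis using card_CP[OF assms] 1 by simp
  next
    case 2
    then have "K n k s = {(j,x). j \<le> n \<and> (x = 1 \<or> x = -1) \<and> V s j x \<and> c j x = -1}"
      by (auto simp: K_def)
    then show ?thesis using card_CM[OF assms] 2 by simp
  next
    case 3
    then have "K n k s = {}" using cx by (force simp: K_def)
    then show ?thesis using 3 by simp
  qed
qed

lemma sum_if_const: "finite A \<Longrightarrow> (\<Sum>s\<in>A. if P s then (d::int) else 0) = d * int (card {s\<in>A. P s})"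
  by (simp add: sum.inter_filter[symmetric])

lemma snake_rec: "int (card {p. snake (Suc n) p \<and> alpha p = k}) =
   k * int (card {s. snake n s \<and> alpha s = k - 1}) + (k + 1) * int (card {s. snake n s \<and> alpha s = k + 1})"
proof -
  let ?A = "{s. snake n s}"
  have "card {p. snake (Suc n) p \<and> alpha p = k} = card (SIGMA s:?A. K n k s)"
    unfolding T_eq using inj_T by (rule card_image)
  also have "\<dots> = (\<Sum>s\<in>?A. card (K n k s))"
    using finite_snakes finite_K by simp
  finally have "int (card {p. snake (Suc n) p \<and> alpha p = k}) = (\<Sum>s\<in>?A. int (card (K n k s)))"
    by simp
  also have "\<dots> = (\<Sum>s\<in>?A. (if alpha s = k - 1 then k else 0) + (if alpha s = k + 1 then k + 1 else 0))"
    by (rule sum.cong) (auto simp: card_K)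
  also have "\<dots> = k * int (card {s\<in>?A. alpha s = k - 1}) + (k + 1) * int (card {s\<in>?A. alpha s = k + 1})"
    using finite_snakes by (simp add: sum.distrib sum_if_const)
  finally show ?thesis by simp
qed

lemma snake0: "snake 0 p \<longleftrightarrow> p = []"
  by (auto simp: snake_def signed_perm_def)

theorem main: "B n k = card {p. snake n p \<and> alpha p = int k}"
proof (induction n arbitrary: k)
  case 0
  have "{p. snake 0 p \<and> alpha p = int k} = (if k = 0 then {[]} else {})"
    by (auto simp: snake0 alpha_def)
  then show ?case by (simp add: B_0)
next
  case (Suc n)
  have r: "int (card {p. snake (Suc n) p \<and> alpha p = int k}) =
     int k * int (card {s. snake n s \<and> alpha s = int k - 1}) + (int k + 1) * int (card {s. snake n s \<and> alpha s = int k + 1})"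
    by (rule snake_rec)
  have b: "int (B (Suc n) k) = int k * int (B n (k - 1)) + (int k + 1) * int (B n (k + 1))"
    unfolding B_Suc[of n k] by (simp only: of_nat_add of_nat_mult of_nat_1)
  have e2: "int k + 1 = int (k + 1)" by simp
  have IH: "\<And>k. B n k = card {p. snake n p \<and> alpha p = int k}" by (rule Suc.IH)
  have "int k * int (card {s. snake n s \<and> alpha s = int k - 1}) = int k * int (B n (k - 1))"
  proof (cases "k = 0")
    case False
    then obtain m where m: "k = Suc m" by (cases k) auto
    have "int k - 1 = int m" using m by simp
    moreover have "k - 1 = m" using m by simp
    ultimately show ?thesis using IH[of m] by simp
  qed simp
  moreover have "card {s. snake n s \<and> alpha s = int k + 1} = B n (k + 1)"
    by (simp only: e2 IH[of "k+1"])
  ultimately have "int (card {p. snake (Suc n) p \<and> alpha p = int k}) = int (B (Suc n) k)"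
    using r b by simp
  then show ?case by simp
qed

theorem theorem4p5:
  fixes n k :: nat
  assumes "k \<le> n"
  shows "B n k = card {p. snake n p \<and> alpha p = int k}"
  by (rule main)

end
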